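(* Let $b_1,\dots,b_n$ be nonnegative integers, let $i$ be an index with $b_i\ge1$, and put $[\mathbf b-\varepsilon_i]=[b_1,\dots,b_{i-1},b_i-1,b_{i+1},\dots,b_n]$ and $d=b_1+\dots+b_n+1$. Write the Hilbert–Poincaré series of $R_{[\mathbf b-\varepsilon_i]}$ as $$P_{R_{[\mathbf b-\varepsilon_i]}}(t)=\frac{h_0([\mathbf b-\varepsilon_i])+h_1([\mathbf b-\varepsilon_i])t+\dots+h_r([\mathbf b-\varepsilon_i])t^r}{(1-t)^{d-1}}$$ with $h_r([\mathbf b-\varepsilon_i])\ne0$. Then $$P_{R_{[\mathbf b]}}(t)=\frac{h_0([\mathbf b])+h_1([\mathbf b])t+\dots+h_r([\mathbf b])t^r+h_{r+1}([\mathbf b])t^{r+1}}{(1-t)^{d}},$$ where $h_0([\mathbf b])=1$, for $k=1,\dots,r$ $$h_k([\mathbf b])=\frac{(d-1-b_i-(k-1))\,h_{k-1}([\mathbf b-\varepsilon_i])+(b_i+k)\,h_k([\mathbf b-\varepsilon_i])}{b_i},$$ and $h_{r+1}([\mathbf b])=\frac{(d-1-b_i-r)\,h_r([\mathbf b-\varepsilon_i])}{b_i}$ (which may be zero). If $h_{r+1}([\mathbf b])=0$, then $h_r([\mathbf b])=\frac{h_{r-1}([\mathbf b-\varepsilon_i])+(b_i+r)h_r([\mathbf b-\varepsilon_i])}{b_i}>0$.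
   Context: Let $K$ be a field and $b_1,\dots,b_n$ nonnegative integers; write $[\mathbf b]=[b_1,\dots,b_n]$. Let $\mathcal M=\{0,\dots,b_1\}\times\dots\times\{0,\dots,b_n\}\subset\mathbb N^n$, $S=K[T_v\mid v\in\mathcal M]$ with all $T_v$ of degree 1, and let $\mathcal J_{[\mathbf b]}$ be the kernel of the ring homomorphism $S\to K[x_{j,l}\mid 1\le j\le n,\,0\le l\le b_j]$, $T_v\mapsto x_{1,v_1}x_{2,v_2}\cdots x_{n,v_n}$ (the ideal of the Segre embedding of $\mathbb P^{b_1}\times\dots\times\mathbb P^{b_n}$). Set $R_{[\mathbf b]}=S/\mathcal J_{[\mathbf b]}$. Its Hilbert function is $H_{R_{[\mathbf b]}}(l)=\prod_{j=1}^n\binom{b_j+l}{b_j}$, its Krull dimension is $b_1+\dots+b_n+1$, and its Hilbert–Poincaré series is $P_{R_{[\mathbf b]}}(t)=\sum_{l\ge0}H_{R_{[\mathbf b]}}(l)t^l$. *)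

theory Defs
  imports "HOL-Computational_Algebra.Formal_Power_Series"
begin

definition segre_hilbert_fun :: "nat list \<Rightarrow> nat \<Rightarrow> nat" where
  "segre_hilbert_fun b l = (\<Prod>j<length b. (b ! j + l) choose (b ! j))"

definition segre_hp_series :: "nat list \<Rightarrow> rat fps" where
  "segre_hp_series b = Abs_fps (\<lambda>l. of_nat (segre_hilbert_fun b l))"

end

theory Submission
  imports Defs
begin

lemma hilb_rec:
  assumes i: "i < length b" and bi: "b ! i \<ge> 1"
  shows "b ! i * segre_hilbert_fun b l = (b ! i + l) * segre_hilbert_fun (b[i := b ! i - 1]) l"
proof -
  let ?b' = "b[i := b ! i - 1]"
  have fin: "finite {..<length b}" by simp
  have iin: "i \<in> {..<length b}" using i by simp
  have rest: "(\<Prod>j\<in>{..<length b} - {i}. (b ! j + l) choose (b ! j))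
            = (\<Prod>j\<in>{..<length b} - {i}. (?b' ! j + l) choose (?b' ! j))"
    by (rule prod.cong) auto
  obtain k where k: "b ! i = Suc k" using bi by (cases "b ! i") auto
  have key: "b ! i * ((b ! i + l) choose b ! i) = (b ! i + l) * ((?b' ! i + l) choose ?b' ! i)"
    using i k binomial_absorption[of k "Suc k + l"] by simp
  have "b ! i * segre_hilbert_fun b l
      = b ! i * (((b ! i + l) choose b ! i) * (\<Prod>j\<in>{..<length b} - {i}. (b ! j + l) choose (b ! j)))"
    unfolding segre_hilbert_fun_def by (subst prod.remove[OF fin iin]) simp
  also have "\<dots> = (b ! i + l) * (((?b' ! i + l) choose ?b' ! i) * (\<Prod>j\<in>{..<length b} - {i}. (?b' ! j + l) choose (?b' ! j)))"
    using key rest by (metis (no_types, lifting) mult.assoc)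
  also have "\<dots> = (b ! i + l) * segre_hilbert_fun ?b' l"
    unfolding segre_hilbert_fun_def length_list_update by (subst prod.remove[OF fin iin]) simp
  finally show ?thesis .
qed

lemma series_rec:
  assumes i: "i < length b" and bi: "b ! i \<ge> 1"
  shows "fps_const (of_nat (b ! i)) * segre_hp_series b
       = fps_const (of_nat (b ! i)) * segre_hp_series (b[i := b ! i - 1])
         + fps_X * fps_deriv (segre_hp_series (b[i := b ! i - 1]))"
proof (rule fps_ext)
  fix n
  have h: "of_nat (b ! i) * (of_nat (segre_hilbert_fun b n) :: rat)
      = (of_nat (b ! i) + of_nat n) * of_nat (segre_hilbert_fun (b[i := b ! i - 1]) n)"
    using arg_cong[OF hilb_rec[OF i bi, of n], of "of_nat :: nat \<Rightarrow> rat"] by simp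
  show "fps_nth (fps_const (of_nat (b ! i)) * segre_hp_series b) n =
    fps_nth (fps_const (of_nat (b ! i)) * segre_hp_series (b[i := b ! i - 1]) +
     fps_X * fps_deriv (segre_hp_series (b[i := b ! i - 1]))) n"
    using h by (cases n) (auto simp: segre_hp_series_def algebra_simps)
qed

lemma ring_aux:
  fixes B P X D Y A c :: "'a::comm_ring_1"
  shows "(B*P + X*D) * (Y*Y*A) = B*((P*(Y*A))*Y) + X*((D*(Y*A) + P*(-(c*A)))*Y + c*(P*(Y*A)))"
  by (simp add: algebra_simps)

lemma Q_rec:
  fixes P P2 :: "rat fps" and B :: rat and M :: nat
  assumes "fps_const B * P2 = fps_const B * P + fps_X * fps_deriv P"
  shows "fps_const B * (P2 * (1 - fps_X) ^ (Suc M + 1))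
    = fps_const B * ((P * (1 - fps_X) ^ Suc M) * (1 - fps_X))
      + fps_X * (fps_deriv (P * (1 - fps_X) ^ Suc M) * (1 - fps_X)
                 + fps_const (of_nat (Suc M)) * (P * (1 - fps_X) ^ Suc M))"
proof -
  define Y :: "rat fps" where "Y = 1 - fps_X"
  define A where "A = Y ^ M"
  define c :: "rat fps" where "c = fps_const (of_nat (Suc M))"
  have d: "fps_deriv (Y ^ Suc M) = - (c * A)"
    unfolding Y_def A_def c_def by (subst fps_deriv_power) (simp add: fps_eq_iff algebra_simps)
  have e1: "Y ^ Suc M = Y * A" unfolding A_def by simp
  have e2: "Y ^ (Suc M + 1) = Y * Y * A" unfolding A_def by simp
  have d': "fps_deriv (P * (Y * A)) = fps_deriv P * (Y * A) + P * (- (c * A))"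
  proof -
    have dd: "fps_deriv (Y * A) = - (c * A)" using d unfolding e1 .
    show ?thesis by (subst fps_deriv_mult[of P], subst dd) (simp add: algebra_simps)
  qed
  show ?thesis
    unfolding Y_def[symmetric] c_def[symmetric] e1 e2 d'
    using ring_aux[of "fps_const B" P fps_X "fps_deriv P" Y A c] assms
    by (metis mult.assoc)
qed

lemma nth_one_minus_X:
  fixes f :: "rat fps"
  shows "fps_nth (f * (1 - fps_X)) (Suc m) = fps_nth f (Suc m) - fps_nth f m"
  by (simp add: algebra_simps)

definition hc :: "nat list \<Rightarrow> nat \<Rightarrow> rat" where
  "hc b k = fps_nth (segre_hp_series b * (1 - fps_X) ^ (sum_list b + 1)) k"

lemma hc0: "hc b 0 = 1"
  by (simp add: hc_def segre_hp_series_def segre_hilbert_fun_def fps_power_zeroth)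

lemma hc_rec:
  assumes i: "i < length b" and bi: "b ! i \<ge> 1"
  shows "of_nat (b ! i) * hc b (Suc m)
     = (of_nat (b ! i) + of_nat (Suc m)) * hc (b[i := b ! i - 1]) (Suc m)
       + (of_nat (sum_list b) - of_nat (b ! i) - of_nat m) * hc (b[i := b ! i - 1]) m"
proof -
  let ?b' = "b[i := b ! i - 1]"
  have s: "sum_list b = Suc (sum_list ?b')"
    using i bi sum_list_update[OF i, of "b ! i - 1"] elem_le_sum_list[OF i] by simp
  define M where "M = sum_list ?b'"
  define Q where "Q = segre_hp_series ?b' * (1 - fps_X) ^ Suc M"
  have q: "\<And>k. hc ?b' k = fps_nth Q k" unfolding hc_def Q_def M_def by simp
  have e: "fps_const (of_nat (b ! i)) * (segre_hp_series b * (1 - fps_X) ^ (Suc M + 1))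
    = fps_const (of_nat (b ! i)) * (Q * (1 - fps_X))
      + fps_X * (fps_deriv Q * (1 - fps_X) + fps_const (of_nat (Suc M)) * Q)"
    unfolding Q_def by (rule Q_rec[OF series_rec[OF i bi]])
  have "of_nat (b ! i) * hc b (Suc m) = fps_nth (fps_const (of_nat (b ! i)) * (segre_hp_series b * (1 - fps_X) ^ (Suc M + 1))) (Suc m)"
    unfolding hc_def M_def s by simp
  also have "\<dots> = of_nat (b ! i) * (fps_nth Q (Suc m) - fps_nth Q m)
      + (fps_nth (fps_deriv Q * (1 - fps_X)) m + of_nat (Suc M) * fps_nth Q m)"
    unfolding e by (simp only: fps_add_nth fps_mult_left_const_nth nth_one_minus_X fps_X_mult_nth) simp
  also have "\<dots> = (of_nat (b ! i) + of_nat (Suc m)) * fps_nth Q (Suc m)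
       + (of_nat (sum_list b) - of_nat (b ! i) - of_nat m) * fps_nth Q m"
    by (cases m) (simp_all add: s M_def algebra_simps nth_one_minus_X)
  finally show ?thesis unfolding q .
qed

definition V :: "nat list \<Rightarrow> nat \<Rightarrow> bool" where
  "V b k = (sum_list b < k \<or> (\<exists>j<length b. sum_list b < k + b ! j))"

lemma hc_base:
  assumes "sum_list b = 0"
  shows "hc b k = (if k = 0 then 1 else 0)"
proof -
  have z: "\<And>j. j < length b \<Longrightarrow> b ! j = 0"
    using elem_le_sum_list[of _ b] assms by fastforce
  have H: "\<And>l. segre_hilbert_fun b l = 1"
    unfolding segre_hilbert_fun_def by (rule prod.neutral) (simp add: z)
  have S: "segre_hp_series b = Abs_fps (\<lambda>_. 1)"
    unfolding segre_hp_series_def H by simp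
  show ?thesis
  proof (cases k)
    case 0 then show ?thesis by (simp add: hc0)
  next
    case (Suc m)
    then show ?thesis unfolding hc_def assms S
      by (simp only: power_one_right nth_one_minus_X Nat.add_0) simp
  qed
qed

lemma hc_props:
  "\<forall>b. sum_list b = N \<longrightarrow> (\<forall>k. hc b k \<ge> 0 \<and> (V b k \<longrightarrow> hc b k = 0))"
proof (induction N)
  case 0
  then show ?case using elem_le_sum_list leD by (auto simp: hc_base V_def)
next
  case (Suc N)
  show ?case
  proof (intro allI impI)
    fix b :: "nat list" and k
    assume sb: "sum_list b = Suc N"
    have "\<exists>x\<in>set b. x \<noteq> 0" using sb by (metis sum_list_eq_0_iff nat.distinct(1))
    then obtain i where i: "i < length b" and bi: "b ! i \<ge> 1"
      by (metis in_set_conv_nth less_one not_le)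
    define B where "B = b ! i"
    let ?b' = "b[i := b ! i - 1]"
    have s: "sum_list b = Suc (sum_list ?b')"
      using i bi sum_list_update[OF i, of "b ! i - 1"] elem_le_sum_list[OF i] by simp
    have IH: "\<And>k. hc ?b' k \<ge> 0 \<and> (V ?b' k \<longrightarrow> hc ?b' k = 0)"
      using Suc.IH s sb by simp
    have nb: "\<And>j. j < length b \<Longrightarrow> ?b' ! j = (if j = i then B - 1 else b ! j)"
      using i by (simp add: B_def nth_list_update)
    have Bpos: "(of_nat B :: rat) > 0" using bi B_def by simp
    show "hc b k \<ge> 0 \<and> (V b k \<longrightarrow> hc b k = 0)"
    proof (cases k)
      case 0
      have "\<not> V b 0" unfolding V_def by (auto simp: not_less elem_le_sum_list) (meson elem_le_sum_list not_le)
      then show ?thesis using 0 by (simp add: hc0)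
    next
      case (Suc m)
      have rec: "of_nat B * hc b k
        = (of_nat B + of_nat (Suc m)) * hc ?b' (Suc m)
          + (of_nat (Suc N) - of_nat B - of_nat m) * hc ?b' m"
        using hc_rec[OF i bi, of m] Suc sb B_def by simp
      have nn1: "(of_nat B + of_nat (Suc m)) * hc ?b' (Suc m) \<ge> 0"
        using IH[of "Suc m"] by simp
      have nn2: "(of_nat (Suc N) - of_nat B - of_nat m) * hc ?b' m \<ge> 0"
      proof (cases "hc ?b' m = 0")
        case False
        then have "\<not> V ?b' m" using IH[of m] by blast
        then have "\<not> sum_list ?b' < m + ?b' ! i" unfolding V_def using i by auto
        then have "m + B \<le> Suc N" using nb[OF i] s sb bi B_def by simp
        then have "(of_nat (Suc N) - of_nat B - of_nat m :: rat) \<ge> 0"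
          by (simp add: of_nat_add[symmetric] del: of_nat_add)
        then show ?thesis using IH[of m] by simp
      qed simp
      have ge: "hc b k \<ge> 0"
      proof -
        have "of_nat B * hc b k \<ge> 0" using rec nn1 nn2 by simp
        then show ?thesis using Bpos by (simp add: zero_le_mult_iff)
      qed
      have van: "V b k \<Longrightarrow> hc b k = 0"
      proof -
        assume v: "V b k"
        have lb: "length ?b' = length b" by simp
        have v12: "V ?b' (Suc m) \<and> (m + B = Suc N \<or> V ?b' m)"
          using v[unfolded V_def]
        proof (elim disjE exE conjE)
          assume "sum_list b < k"
          then show ?thesis using Suc s sb unfolding V_def by simp
        next
          fix j assume j: "j < length b" and lt: "sum_list b < k + b ! j"
          show ?thesis
          proof (cases "j = i")
            case True
            then have "?b' ! j = B - 1" using nb[OF j] by simp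
            then have "sum_list ?b' < Suc m + ?b' ! j \<and> (m + B = Suc N \<or> sum_list ?b' < m + ?b' ! j)"
              using lt Suc s sb bi True B_def by auto
            then show ?thesis using j lb unfolding V_def by (metis)
          next
            case False
            then have "?b' ! j = b ! j" using nb[OF j] by simp
            then have "sum_list ?b' < Suc m + ?b' ! j \<and> sum_list ?b' < m + ?b' ! j"
              using lt Suc s sb by auto
            then show ?thesis using j lb unfolding V_def by (metis)
          qed
        qed
        have v1: "V ?b' (Suc m)" using v12 by blast
        have v2: "(of_nat (Suc N) - of_nat B - of_nat m :: rat) = 0 \<or> V ?b' m"
          using v12 by (auto simp: of_nat_add[symmetric] simp del: of_nat_add)
        have "of_nat B * hc b k = 0"
          using rec IH[of "Suc m"] IH[of m] v1 v2 by auto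
        then show "hc b k = 0" using Bpos by simp
      qed
      show ?thesis using ge van by blast
    qed
  qed
qed

lemma sum_poly_nth:
  "fps_nth (\<Sum>k\<le>r. fps_const (g k) * fps_X ^ k) n = (if n \<le> r then (g n :: rat) else 0)"
proof -
  have "fps_nth (\<Sum>k\<le>r. fps_const (g k) * fps_X ^ k) n = (\<Sum>k\<le>r. g k * (if n = k then 1 else 0))"
    by (simp add: fps_sum_nth fps_X_power_nth)
  also have "\<dots> = (\<Sum>k\<le>r. if n = k then g k else 0)"
    by (rule sum.cong) auto
  also have "\<dots> = (if n \<le> r then g n else 0)" by (simp add: sum.delta)
  finally show ?thesis .
qed

theorem mainTheorem4:
  fixes b :: "nat list" and i :: nat and h :: "nat \<Rightarrow> rat" and r :: nat
  assumes i: "i < length b"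
    and bi: "b ! i \<ge> 1"
    and hr: "h r \<noteq> 0"
    and hser: "segre_hp_series (b[i := b ! i - 1]) * (1 - fps_X) ^ (sum_list b)
               = (\<Sum>k\<le>r. fps_const (h k) * fps_X ^ k)"
  shows
    "let d = sum_list b + 1;
         bi = b ! i;
         c = (\<lambda>k. if k = 0 then 1
                   else ((of_nat d - 1 - of_nat bi - (of_nat k - 1)) * h (k - 1)
                         + (of_nat bi + of_nat k) * (if k \<le> r then h k else 0)) / of_nat bi)
     in segre_hp_series b * (1 - fps_X) ^ d = (\<Sum>k\<le>r+1. fps_const (c k) * fps_X ^ k)
        \<and> c 0 = 1
        \<and> (\<forall>k. 1 \<le> k \<and> k \<le> r \<longrightarrow>
              c k = ((of_nat d - 1 - of_nat bi - (of_nat k - 1)) * h (k - 1)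
                     + (of_nat bi + of_nat k) * h k) / of_nat bi)
        \<and> c (r + 1) = (of_nat d - 1 - of_nat bi - of_nat r) * h r / of_nat bi
        \<and> (c (r + 1) = 0 \<longrightarrow>
              c r > 0 \<and>
              (r \<ge> 1 \<longrightarrow> c r = (h (r - 1) + (of_nat bi + of_nat r) * h r) / of_nat bi))"
proof -
  let ?b' = "b[i := b ! i - 1]"
  define N where "N = sum_list b"
  define B where "B = b ! i"
  define d where "d = sum_list b + 1"
  define c where "c = (\<lambda>k. if k = 0 then 1
                   else ((of_nat d - 1 - of_nat B - (of_nat k - 1)) * h (k - 1)
                         + (of_nat B + of_nat k) * (if k \<le> r then h k else 0)) / (of_nat B :: rat))"
  have s: "sum_list b = Suc (sum_list ?b')"
    using i bi sum_list_update[OF i, of "b ! i - 1"] elem_le_sum_list[OF i] by simp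
  have sumnth: "\<And>n. fps_nth (\<Sum>k\<le>r. fps_const (h k) * fps_X ^ k) n = (if n \<le> r then h n else 0)"
    by (rule sum_poly_nth)
  have hq: "\<And>k. hc ?b' k = (if k \<le> r then h k else 0)"
    unfolding hc_def using hser s by (simp add: sumnth)
  have h0: "h 0 = 1" using hq[of 0] hc0[of ?b'] by simp
  have Bpos: "(of_nat B :: rat) > 0" using bi B_def by simp
  have props: "\<And>bb k. hc bb k \<ge> 0" using hc_props by blast
  have hcb: "\<And>n. hc b n = (if n \<le> r + 1 then c n else 0)"
  proof -
    fix n
    show "hc b n = (if n \<le> r + 1 then c n else 0)"
    proof (cases n)
      case 0 then show ?thesis by (simp add: hc0 c_def)
    next
      case (Suc m)
      have rec: "of_nat B * hc b (Suc m) = (of_nat B + of_nat (Suc m)) * hc ?b' (Suc m)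
         + (of_nat (sum_list b) - of_nat B - of_nat m) * hc ?b' m"
        using hc_rec[OF i bi, of m] B_def by simp
      have e: "hc b (Suc m) = ((of_nat B + of_nat (Suc m)) * hc ?b' (Suc m)
         + (of_nat (sum_list b) - of_nat B - of_nat m) * hc ?b' m) / of_nat B"
        using rec Bpos by (simp add: field_simps)
      show ?thesis
      proof (cases "Suc m \<le> r + 1")
        case True
        then show ?thesis unfolding Suc e c_def d_def hq using True
          by (simp add: algebra_simps)
      next
        case False
        then show ?thesis unfolding Suc e hq by simp
      qed
    qed
  qed
  have main: "segre_hp_series b * (1 - fps_X) ^ d = (\<Sum>k\<le>r+1. fps_const (c k) * fps_X ^ k)
        \<and> c 0 = 1
        \<and> (\<forall>k. 1 \<le> k \<and> k \<le> r \<longrightarrow>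
              c k = ((of_nat d - 1 - of_nat B - (of_nat k - 1)) * h (k - 1)
                     + (of_nat B + of_nat k) * h k) / of_nat B)
        \<and> c (r + 1) = (of_nat d - 1 - of_nat B - of_nat r) * h r / of_nat B
        \<and> (c (r + 1) = 0 \<longrightarrow>
              c r > 0 \<and>
              (r \<ge> 1 \<longrightarrow> c r = (h (r - 1) + (of_nat B + of_nat r) * h r) / of_nat B))"
  proof (intro conjI allI impI)
    show "segre_hp_series b * (1 - fps_X) ^ d = (\<Sum>k\<le>r+1. fps_const (c k) * fps_X ^ k)"
    proof (rule fps_ext)
      fix n
      show "fps_nth (segre_hp_series b * (1 - fps_X) ^ d) n = fps_nth (\<Sum>k\<le>r+1. fps_const (c k) * fps_X ^ k) n"
        using hcb[of n] unfolding hc_def d_def sum_poly_nth by simp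
    qed
  next
    show "c 0 = 1" by (simp add: c_def)
  next
    fix k assume "1 \<le> k \<and> k \<le> r"
    then show "c k = ((of_nat d - 1 - of_nat B - (of_nat k - 1)) * h (k - 1)
                     + (of_nat B + of_nat k) * h k) / of_nat B" by (simp add: c_def)
  next
    show "c (r + 1) = (of_nat d - 1 - of_nat B - of_nat r) * h r / of_nat B" by (simp add: c_def)
  next
    assume c0: "c (r + 1) = 0"
    have z: "(of_nat d - 1 - of_nat B - of_nat r :: rat) = 0"
      using c0 hr Bpos by (simp add: c_def)
    have hrpos: "h r > 0" using props[of ?b' r] hq[of r] hr by simp
    show "c r > 0"
    proof (cases r)
      case 0 then show ?thesis by (simp add: c_def)
    next
      case (Suc m)
      have "h m \<ge> 0" using props[of ?b' m] hq[of m] Suc by simp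
      then have "(h m + (of_nat B + of_nat r) * h r) / of_nat B > 0"
        using hrpos Bpos by (simp add: add_nonneg_pos)
      moreover have "c r = (h m + (of_nat B + of_nat r) * h r) / of_nat B"
        using z Suc by (simp add: c_def algebra_simps)
      ultimately show ?thesis by simp
    qed
  next
    assume c0: "c (r + 1) = 0" and r1: "r \<ge> 1"
    have z: "(of_nat d - 1 - of_nat B - of_nat r :: rat) = 0"
      using c0 hr Bpos by (simp add: c_def)
    show "c r = (h (r - 1) + (of_nat B + of_nat r) * h r) / of_nat B"
      using z r1 by (simp add: c_def algebra_simps of_nat_diff)
  qed
  show ?thesis using main unfolding d_def B_def c_def Let_def .
qed

end
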